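(* Define sets of positive integers $R_1,R_2,\dots$ by $R_1=\{2\}$ and, for $k\geq 1$, $R_{k+1}=\{(x+5)^2 : x\in R_k\}\cup\{x\in\mathbb{Z}_{>0} : x^2\in R_k\}$. Then every integer $x$ with $x\geq 2$ and $x\not\equiv 0\pmod 5$ lies in $R_i$ for at least one $i\geq 1$. *)

theory Defs
  imports Main
begin

text \<open>R n for n \<ge> 1 is the set R_n of the paper; R 0 is an unused empty placeholder.\<close>
fun R :: "nat \<Rightarrow> int set" where
  "R 0 = {}"
| "R (Suc 0) = {2}"
| "R (Suc (Suc k)) =
     {(x + 5)^2 | x. x \<in> R (Suc k)} \<union> {x. x > 0 \<and> x^2 \<in> R (Suc k)}"

end

theory Submission
  imports Defs
begin

lemma R_pos: "y \<in> R i \<Longrightarrow> y > 0"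
proof (induction i arbitrary: y rule: R.induct)
  case (3 k)
  then show ?case
    by (auto simp del: power2_eq_square) (smt (verit) zero_less_power2)
qed auto

definition S :: "int \<Rightarrow> bool" where "S x \<longleftrightarrow> (\<exists>i\<ge>1. x \<in> R i)"

lemma S_sq: "S x \<Longrightarrow> S ((x+5)^2)"
  unfolding S_def
proof -
  assume "\<exists>i\<ge>1. x \<in> R i"
  then obtain k where "x \<in> R (Suc k)" by (metis Suc_le_D One_nat_def)
  then have "(x+5)^2 \<in> R (Suc (Suc k))" by auto
  then show "\<exists>i\<ge>1. (x+5)^2 \<in> R i" by (metis le_add1 plus_1_eq_Suc)
qed

lemma S_rt: "x > 0 \<Longrightarrow> S (x^2) \<Longrightarrow> S x"
  unfolding S_def
proof -
  assume "x > 0" "\<exists>i\<ge>1. x^2 \<in> R i"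
  then obtain k where "x^2 \<in> R (Suc k)" by (metis Suc_le_D One_nat_def)
  then have "x \<in> R (Suc (Suc k))" using \<open>x > 0\<close> by auto
  then show "\<exists>i\<ge>1. x \<in> R i" by (metis le_add1 plus_1_eq_Suc)
qed

lemma S_pos: "S x \<Longrightarrow> x > 0"
  unfolding S_def using R_pos by blast

lemma S_5: "S x \<Longrightarrow> S (x+5)"
  using S_sq S_rt S_pos by (smt (verit))

lemma S_5n: "S x \<Longrightarrow> S (x + 5 * int n)"
proof (induction n)
  case (Suc n)
  then have "S (x + 5 * int n + 5)" using S_5 by blast
  then show ?case by (simp add: algebra_simps)
qed simp

lemma S_from: assumes "S a" "y \<ge> a" "y mod 5 = a mod 5" shows "S y"
proof -
  have "5 dvd (y - a)" using assms(3) by (simp add: mod_eq_dvd_iff)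
  then obtain m where m: "y - a = 5 * m" by blast
  have "m \<ge> 0" using m assms(2) by linarith
  then have "y = a + 5 * int (nat m)" using m by simp
  then show ?thesis using S_5n[OF assms(1), of "nat m"] by simp
qed

lemma S2: "S 2" unfolding S_def by (rule exI[of _ 1]) simp
lemma S49: "S 49" using S_sq[OF S2] by simp
lemma S2916: "S 2916" using S_sq[OF S49] by simp
lemma S56: "S 56" using S_from[OF S2916, of 3136] S_rt[of 56] by simp
lemma S11: "S 11" using S_from[OF S56, of 121] S_rt[of 11] by simp
lemma S6: "S 6" using S_from[OF S11, of 36] S_rt[of 6] by simp
lemma S4: "S 4" using S_from[OF S6, of 16] S_rt[of 4] by simp
lemma S3: "S 3" using S_from[OF S4, of 9] S_rt[of 3] by simp

theorem corollary6:
  fixes x :: int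
  assumes "x \<ge> 2" and "\<not> (5 dvd x)"
  shows "\<exists>i\<ge>1. x \<in> R i"
proof -
  have "x mod 5 = 1 \<or> x mod 5 = 2 \<or> x mod 5 = 3 \<or> x mod 5 = 4"
    using assms(2) by presburger
  moreover have "x mod 5 = 1 \<Longrightarrow> x \<ge> 6" using assms(1) by presburger
  moreover have "x mod 5 = 3 \<Longrightarrow> x \<ge> 3" using assms(1) by presburger
  moreover have "x mod 5 = 4 \<Longrightarrow> x \<ge> 4" using assms(1) by presburger
  ultimately have "S x"
    using S_from[OF S6, of x] S_from[OF S2, of x] S_from[OF S3, of x] S_from[OF S4, of x] assms(1)
    by auto
  then show ?thesis unfolding S_def .
qed

end
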